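(* Let $d\ge0$ and $a$ be integers and $r=-(a+d)$. The substitution $H(t)\mapsto \varphi(x):=x^dH(1-x)$ is a linear isomorphism from the space of formal Laurent series $H(t)$ over $\mathbb{K}$ around $t=1$ of pole order at most $d$ satisfying $H(t^{-1})=(-1)^dt^{-a}H(t)$ onto $\mathcal{F}_r$. Moreover, with respect to the Cauchy product of formal power series, $\mathcal{F}_r\cdot\mathcal{F}_s\subseteq\mathcal{F}_{r+s}$ for all $r,s\in\mathbb{Z}$ and $1\in\mathcal{F}_0$, so that $\mathcal{F}=\bigoplus_{r\in\mathbb{Z}}\mathcal{F}_r$ is a $\mathbb{Z}$-graded algebra.
   Context: $\mathbb{K}$ is one of $\mathbb{Q},\mathbb{R},\mathbb{C}$. For $r\in\mathbb{Z}$, $\mathcal{F}_r$ is the space of formal power series $\varphi(x)\in\mathbb{K}[[x]]$ satisfying $\varphi(x/(x-1))=(1-x)^r\varphi(x)$ (the composition is well defined since $x/(x-1)=-x-x^2-\cdots$ has zero constant term). $\mathcal{F}=\bigoplus_{r}\mathcal{F}_r$ is the $\mathbb{Z}$-graded vector space with homogeneous components $\mathcal{F}_r$, the product of homogeneous elements being the Cauchy product. The functional equation $H(t^{-1})=(-1)^dt^{-a}H(t)$ is understood as an identity of formal Laurent series in $u=1-t$ (with $t^{-1}=\sum_{j\ge0}u^j$, $1-t^{-1}=-u/(1-u)$, $t^{-a}=(1-u)^{-a}$). *)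

theory Defs
  imports "HOL-Computational_Algebra.Formal_Laurent_Series"
begin

text \<open>The substitution x -> x/(x-1) (equivalently u -> -u/(1-u) = 1 - t^{-1} with u = 1 - t).\<close>
definition sigma_subst :: "'a::field fps" where
  "sigma_subst = fps_X / (fps_X - 1)"

definition F_space :: "int \<Rightarrow> 'a::field fps set" where
  "F_space r = {\<phi>. fps_to_fls (fps_compose \<phi> sigma_subst)
                     = (1 - fls_X) powi r * fps_to_fls \<phi>}"

text \<open>Laurent series H in u = 1 - t with pole order at most d satisfying
  H(t^{-1}) = (-1)^d t^{-a} H(t), where t^{-1} corresponds to 1 - t^{-1} = -u/(1-u)
  and t^{-a} = (1-u)^{-a}.\<close>
definition H_space :: "int \<Rightarrow> int \<Rightarrow> 'a::field fls set" where
  "H_space d a = {H. - d \<le> fls_subdegree H \<and>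
      fls_compose_fps H sigma_subst = (-1) powi d * (1 - fls_X) powi (- a) * H}"

text \<open>The map H(t) |-> x^d H(1-x); with u = 1 - t = x this is multiplication by x^d.\<close>
definition subst_map :: "int \<Rightarrow> 'a::field fls \<Rightarrow> 'a fps" where
  "subst_map d H = fls_regpart (fls_X_intpow d * H)"

end

theory Submission
  imports Defs
begin

lemma sigma_mult: "(sigma_subst :: 'a::field fps) * (fps_X - 1) = fps_X"
proof -
  have h: "(fps_X - 1 :: 'a fps) $ 0 \<noteq> 0" by simp
  show ?thesis unfolding sigma_subst_def
    using fps_divide_unit[OF h, of fps_X] inverse_mult_eq_1[OF h]
    by (simp add: mult.assoc)
qed

lemma sigma_nz: "(sigma_subst :: 'a::field fps) \<noteq> 0"
  using sigma_mult[where 'a='a] by (metis fps_X_neq_zero mult_zero_left)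

lemma sigma_0: "fps_nth (sigma_subst :: 'a::field fps) 0 = 0"
  unfolding sigma_subst_def
  by (simp add: fps_divide_unit)

lemma S_eq: "fps_to_fls (sigma_subst :: 'a::field fps) = - fls_X * (1 - fls_X) powi (-1)"
proof -
  have "fps_to_fls (sigma_subst :: 'a fps) * (fls_X - 1) = fls_X"
    using arg_cong[OF sigma_mult, of fps_to_fls] by (simp add: fls_times_fps_to_fls)
  moreover have "(1 - fls_X :: 'a fls) \<noteq> 0"
    by (metis fls_X_nth right_minus_eq one_neq_zero fls_one_nth zero_neq_one)
  ultimately show ?thesis
    by (simp add: power_int_minus field_simps)
qed

lemma regpart_const: "fls_regpart (fls_const (c::'a::field) * f) = fps_const c * fls_regpart f"
  by (intro fps_ext) simp


lemma one_minus_X_nz: "(1 - fls_X :: 'a::field fls) \<noteq> 0"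
  by (metis fls_X_nth right_minus_eq fls_one_nth zero_neq_one)

lemma compose_fps_to_fls: "fps_to_fls (fps_compose \<phi> (sigma_subst::'a::field fps)) = fls_compose_fps (fps_to_fls \<phi>) sigma_subst"
  by (rule fls_compose_fps_to_fls[symmetric, OF sigma_nz sigma_0])

lemma key:
  fixes H :: "'a::field fls" and d a :: int
  shows "fls_compose_fps (fls_X_intpow d * H) sigma_subst = (1 - fls_X) powi (-(a+d)) * (fls_X_intpow d * H)
     \<longleftrightarrow> fls_compose_fps H sigma_subst = (-1) powi d * (1 - fls_X) powi (- a) * H"
proof -
  define u :: "'a fls" where "u = 1 - fls_X"
  have u: "u \<noteq> 0" unfolding u_def by (rule one_minus_X_nz)
  define C where "C = fls_compose_fps H sigma_subst"
  have c1: "fls_compose_fps (fls_X_intpow d * H) sigma_subst = (- fls_X * u powi (-1)) powi d * C"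
    unfolding C_def u_def
    by (simp add: fls_compose_fps_mult sigma_nz sigma_0 fls_compose_fps_powi S_eq flip: fls_X_power_int)
  have c2: "(- fls_X * u powi (-1)) powi d = (-1) powi d * fls_X_intpow d * u powi (-d)"
    by (simp add: power_int_mult_distrib power_int_minus_left power_int_mult power_int_minus power_int_inverse
        flip: fls_X_power_int)
  define A where "A = (-1) powi d * fls_X_intpow d * u powi (-d)"
  have A: "A \<noteq> 0" unfolding A_def using u by simp
  have m1: "((-1::'a fls) powi d) * ((-1) powi d) = 1"
    by (metis power_int_mult_distrib mult_minus_left mult_minus_right minus_minus mult_1_left power_int_1_left)
  have Ainv: "inverse A * (u powi (-(a+d)) * (fls_X_intpow d * H)) = (-1) powi d * u powi (- a) * H"
  proof -
    have "inverse A = (-1) powi d * fls_X_intpow (-d) * u powi d"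
    proof (rule inverse_unique)
      have x: "fls_X_intpow d * fls_X_intpow (-d) = (1::'a fls)"
        using fls_X_intpow_times_fls_X_intpow[of d "-d", where 'a='a] by simp
      have y: "u powi (-d) * u powi d = 1" using u by (simp add: power_int_minus)
      show "A * ((-1) powi d * fls_X_intpow (-d) * u powi d) = 1"
        unfolding A_def using m1 x y by (simp add: algebra_simps)
    qed
    moreover have "fls_X_intpow (-d) * fls_X_intpow d = (1::'a fls)"
      using fls_X_intpow_times_fls_X_intpow[of "-d" d, where 'a='a] by simp
    moreover have "u powi d * u powi (-(a+d)) = u powi (-a)"
      using u by (simp add: power_int_add[symmetric])
    ultimately show ?thesis
      by (metis (no_types, lifting) mult.assoc mult.left_commute mult_1_left)
  qed
  have eq: "A * C = u powi (-(a+d)) * (fls_X_intpow d * H) \<longleftrightarrow> C = inverse A * (u powi (-(a+d)) * (fls_X_intpow d * H))"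
    using A by (auto simp: field_simps)
  have lhs: "fls_compose_fps (fls_X_intpow d * H) sigma_subst = A * C"
    using c1 c2 unfolding A_def by simp
  show ?thesis unfolding lhs C_def[symmetric] u_def[symmetric] by (simp only: eq Ainv)
qed

lemma XX: "fls_X_intpow (-d) * (fls_X_intpow d * H) = (H :: 'a::field fls)"
  using fls_X_intpow_times_fls_X_intpow[of "-d" d, where 'a='a] by (simp add: mult.assoc[symmetric])
lemma XX2: "fls_X_intpow d * (fls_X_intpow (-d) * H) = (H :: 'a::field fls)"
  using fls_X_intpow_times_fls_X_intpow[of d "-d", where 'a='a] by (simp add: mult.assoc[symmetric])

theorem proposition3p2:
  fixes d a r :: int
  assumes "0 \<le> d" and "r = - (a + d)"
  shows "bij_betw (subst_map d :: 'a::field_char_0 fls \<Rightarrow> 'a fps) (H_space d a) (F_space r)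
    \<and> (\<forall>H G. subst_map d (H + G) = (subst_map d H + subst_map d G :: 'a fps))
    \<and> (\<forall>(c::'a) H. subst_map d (fls_const c * H) = fps_const c * subst_map d H)
    \<and> (\<forall>(s::int) (s'::int) (\<phi>::'a fps) \<psi>. \<phi> \<in> F_space s \<longrightarrow> \<psi> \<in> F_space s'
          \<longrightarrow> \<phi> * \<psi> \<in> F_space (s + s'))
    \<and> (1::'a fps) \<in> F_space 0"
proof (intro conjI allI impI)
  define g :: "'a fps \<Rightarrow> 'a fls" where "g \<phi> = fls_X_intpow (-d) * fps_to_fls \<phi>" for \<phi>
  have sd: "fls_subdegree (fls_X_intpow d * H) \<ge> 0" if "H \<in> H_space d a" for H :: "'a fls"
  proof (cases "H = 0")
    case False
    then show ?thesis using that by (simp add: H_space_def fls_subdegree_mult_fls_X_intpow)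
  qed simp
  have tf: "fps_to_fls (subst_map d H) = fls_X_intpow d * H" if "H \<in> H_space d a" for H :: "'a fls"
    unfolding subst_map_def using sd[OF that] by simp
  show "bij_betw (subst_map d :: 'a::field_char_0 fls \<Rightarrow> 'a fps) (H_space d a) (F_space r)"
  proof (rule bij_betw_byWitness[where f' = g])
    show "\<forall>H\<in>H_space d a. g (subst_map d H) = H"
      using tf XX[of d] unfolding g_def by metis
    show "\<forall>\<phi>\<in>F_space r. subst_map d (g \<phi>) = \<phi>"
      unfolding g_def subst_map_def XX2 by simp
    show "(subst_map d :: 'a fls \<Rightarrow> 'a fps) ` H_space d a \<subseteq> F_space r"
    proof
      fix \<phi> :: "'a fps" assume "\<phi> \<in> (subst_map d :: 'a fls \<Rightarrow> 'a fps) ` H_space d a"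
      then obtain H where H: "H \<in> H_space d a" "\<phi> = subst_map d H" by blast
      have "fls_compose_fps (fls_X_intpow d * H) sigma_subst = (1 - fls_X) powi (-(a+d)) * (fls_X_intpow d * H)"
        using key[of d H a] H(1) by (simp add: H_space_def)
      then show "\<phi> \<in> F_space r"
        unfolding F_space_def using tf[OF H(1)] H(2) assms(2) by (simp add: compose_fps_to_fls)
    qed
    show "g ` F_space r \<subseteq> H_space d a"
    proof
      fix H assume "H \<in> g ` F_space r"
      then obtain \<phi> where \<phi>: "\<phi> \<in> F_space r" "H = g \<phi>" by blast
      have XH: "fls_X_intpow d * H = fps_to_fls \<phi>" unfolding \<phi>(2) g_def XX2 by (rule refl)
      have e: "fls_compose_fps (fls_X_intpow d * H) sigma_subst = (1 - fls_X) powi (-(a+d)) * (fls_X_intpow d * H)"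
        unfolding XH using \<phi>(1) assms(2) by (simp add: F_space_def compose_fps_to_fls)
      have s: "- d \<le> fls_subdegree H"
      proof (cases "\<phi> = 0")
        case False
        then have "fls_subdegree (fls_X_intpow (-d) * fps_to_fls \<phi>) = fls_subdegree (fps_to_fls \<phi>) + (-d)"
          by (intro fls_subdegree_mult_fls_X_intpow) simp
        then show ?thesis unfolding \<phi>(2) g_def
          using fls_subdegree_fls_to_fps_gt0[of \<phi>] by linarith
      qed (simp add: \<phi>(2) g_def assms(1))
      show "H \<in> H_space d a" unfolding H_space_def using s key[of d H a] e by simp
    qed
  qed
  show "subst_map d (H + G) = (subst_map d H + subst_map d G :: 'a fps)" for H G
    by (simp add: subst_map_def distrib_left)
  show "subst_map d (fls_const c * H) = fps_const c * subst_map d H" for c :: 'a and H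
    unfolding subst_map_def by (metis regpart_const mult.left_commute)
  show "\<phi> * \<psi> \<in> F_space (s + s')" if "\<phi> \<in> F_space s" "\<psi> \<in> F_space s'" for s s' and \<phi> \<psi> :: "'a fps"
  proof -
    have "fps_to_fls ((\<phi> * \<psi>) oo sigma_subst) = fps_to_fls (\<phi> oo sigma_subst) * fps_to_fls (\<psi> oo sigma_subst)"
      by (simp add: fps_compose_mult_distrib sigma_0 fls_times_fps_to_fls)
    also have "\<dots> = ((1 - fls_X) powi s * (1 - fls_X) powi s') * fps_to_fls (\<phi> * \<psi>)"
      using that by (simp add: F_space_def fls_times_fps_to_fls algebra_simps)
    also have "(1 - fls_X) powi s * (1 - fls_X) powi s' = ((1 - fls_X) powi (s + s') :: 'a fls)"
      using one_minus_X_nz[where 'a='a] by (simp add: power_int_add)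
    finally show ?thesis by (simp add: F_space_def)
  qed
  show "(1::'a fps) \<in> F_space 0"
    by (simp add: F_space_def)
qed

end
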